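(* Let $n\ge 1$, let $\mathbf S=\{(\mathbf q_1,v_1),\ldots,(\mathbf q_m,v_m)\}$ be a finite multiset of queries and let $\mathbf Q=(\mathbf q,v)$ be a query, where $\mathbf q,\mathbf q_j\in\mathbb R^n$ and $v,v_j\in[0,\infty)$. The following are equivalent: (1) $\mathbf Q$ is linearly answerable from $\mathbf S$; (2) $\mathbf S\rightarrow\mathbf Q$; (3) there exist $c_1,\ldots,c_m\in\mathbb R$ such that $c_1\mathbf q_1+\cdots+c_m\mathbf q_m=\mathbf q$ and $c_1^2v_1+\cdots+c_m^2v_m\le v$.
   Context: A database is a vector $\mathbf x\in\mathbb R^n$. A linear query is a vector $\mathbf q\in\mathbb R^n$, with exact answer $\mathbf q(\mathbf x)=\mathbf q\cdot\mathbf x=\sum_i q_ix_i$. A query is a pair $\mathbf Q=(\mathbf q,v)$ with $\mathbf q$ a linear query and $v\ge 0$ a variance bound. A mechanism $\mathcal K$ assigns to each database $\mathbf x$ a real random variable $\mathcal K(\mathbf x)$; it answers $\mathbf Q=(\mathbf q,v)$ if for every database $\mathbf x$, $\mathbb E[\mathcal K(\mathbf x)]=\mathbf q(\mathbf x)$ and $\mathrm{Var}[\mathcal K(\mathbf x)]\le v$. Distinct queries are answered with independent randomness. $\mathbf Q$ is answerable from the multiset $\{\mathbf Q_1,\ldots,\mathbf Q_k\}$ if there is a function $f:\mathbb R^k\to\mathbb R$ such that for all mechanisms $\mathcal K_1,\ldots,\mathcal K_k$ answering $\mathbf Q_1,\ldots,\mathbf Q_k$ respectively (with $\mathcal K_1(\mathbf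 x),\ldots,\mathcal K_k(\mathbf x)$ mutually independent), the mechanism $\mathbf x\mapsto f(\mathcal K_1(\mathbf x),\ldots,\mathcal K_k(\mathbf x))$ answers $\mathbf Q$; it is linearly answerable if such an $f$ can be chosen linear. The determinacy relation $\mathbf S\rightarrow\mathbf Q$ between finite multisets of queries and queries is the smallest relation satisfying: (Summation) for every $k\ge 0$, $\{(\mathbf q_1,v_1),\ldots,(\mathbf q_k,v_k)\}\rightarrow(\mathbf q_1+\cdots+\mathbf q_k,\,v_1+\cdots+v_k)$; (Scalar multiplication) for every $c\in\mathbb R$, $\{(\mathbf q,v)\}\rightarrow(c\mathbf q,c^2v)$; (Relaxation) $\{(\mathbf q,v)\}\rightarrow(\mathbf q,v')$ whenever $v\le v'$; (Transitivity) if $\mathbf S_1\rightarrow\mathbf Q_1,\ldots,\mathbf S_k\rightarrow\mathbf Q_k$ and $\{\mathbf Q_1,\ldots,\mathbf Q_k\}\rightarrow\mathbf Q$, then the multiset union $\mathbf S_1\uplus\cdots\uplus\mathbf S_k\rightarrow\mathbf Q$. *)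

theory Defs
  imports "HOL-Probability.Probability" "HOL-Library.Multiset"
begin

type_synonym ('n) query = "(real ^ 'n) \<times> real"

text \<open>A mechanism is represented by the distribution of its output:
  to each database x it assigns a probability distribution on the reals (a Borel
  probability measure).  Independence of several mechanisms is modelled by taking
  the product measure of their output distributions.\<close>

definition answers :: "(real ^ 'n \<Rightarrow> real measure) \<Rightarrow> ('n::finite) query \<Rightarrow> bool" where
  "answers K Q \<longleftrightarrow> (\<forall>x. prob_space (K x) \<and> sets (K x) = sets borel \<and>
      integrable (K x) (\<lambda>t. t) \<and> integrable (K x) (\<lambda>t. t ^ 2) \<and>
      (\<integral>t. t \<partial>K x) = fst Q \<bullet> x \<and>
      (\<integral>t. (t - fst Q \<bullet> x) ^ 2 \<partial>K x) \<le> snd Q)"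

definition lin_answerable :: "('n::finite) query list \<Rightarrow> ('n::finite) query \<Rightarrow> bool" where
  "lin_answerable S Q \<longleftrightarrow> (\<exists>c :: nat \<Rightarrow> real.
     \<forall>K :: nat \<Rightarrow> real ^ 'n \<Rightarrow> real measure.
       (\<forall>i < length S. answers (K i) (S ! i)) \<longrightarrow>
       answers (\<lambda>x. distr (PiM {..<length S} (\<lambda>i. K i x)) borel
                          (\<lambda>\<omega>. \<Sum>i<length S. c i * \<omega> i)) Q)"

inductive determ :: "('n::finite) query multiset \<Rightarrow> ('n::finite) query \<Rightarrow> bool" where
  summation: "(\<forall>p \<in> set qs. snd p \<ge> 0) \<Longrightarrow>
     determ (mset qs) (sum_list (map fst qs), sum_list (map snd qs))"
| scalar: "v \<ge> 0 \<Longrightarrow> determ {#(q, v)#} (c *\<^sub>R q, c ^ 2 * v)"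
| relax: "0 \<le> v \<Longrightarrow> v \<le> v' \<Longrightarrow> determ {#(q, v)#} (q, v')"
| trans: "length Ss = length Qs \<Longrightarrow> (\<forall>i < length Ss. determ (Ss ! i) (Qs ! i)) \<Longrightarrow>
     determ (mset Qs) Q \<Longrightarrow> determ (sum_list Ss) Q"

end

theory Submission
  imports Defs
begin


context product_prob_space begin

lemma my_int_prod_gen:
  fixes f :: "'i \<Rightarrow> 'a \<Rightarrow> real"
  assumes "finite J" "\<And>k. k \<in> J \<Longrightarrow> integrable (M k) (f k)"
  shows "integrable (PiM J M) (\<lambda>\<omega>. \<Prod>k\<in>J. f k (\<omega> k))"
    "(\<integral>\<omega>. (\<Prod>k\<in>J. f k (\<omega> k)) \<partial>PiM J M) = (\<Prod>k\<in>J. integral\<^sup>L (M k) (f k))"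
  using product_integrable_prod[OF assms] product_integral_prod[OF assms] by auto

lemma my_int_single:
  fixes g :: "'a \<Rightarrow> real"
  assumes J: "finite J" "j \<in> J" and g: "integrable (M j) g"
  shows "integrable (PiM J M) (\<lambda>\<omega>. g (\<omega> j))"
    "(\<integral>\<omega>. g (\<omega> j) \<partial>PiM J M) = integral\<^sup>L (M j) g"
proof -
  define f where "f = (\<lambda>k. if k = j then g else (\<lambda>_. 1::real))"
  have fi: "\<And>k. k \<in> J \<Longrightarrow> integrable (M k) (f k)" using g by (auto simp: f_def)
  have e: "(\<Prod>k\<in>J. f k (\<omega> k)) = g (\<omega> j)" for \<omega>
  proof -
    have "(\<Prod>k\<in>J. f k (\<omega> k)) = (\<Prod>k\<in>J. if k = j then g (\<omega> j) else 1)"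
      by (intro prod.cong) (auto simp: f_def M.prob_space)
    then show ?thesis using J by simp
  qed
  have e2: "(\<Prod>k\<in>J. integral\<^sup>L (M k) (f k)) = integral\<^sup>L (M j) g"
  proof -
    have "(\<Prod>k\<in>J. integral\<^sup>L (M k) (f k)) = (\<Prod>k\<in>J. if k = j then integral\<^sup>L (M j) g else 1)"
      by (intro prod.cong) (auto simp: f_def M.prob_space)
    then show ?thesis using J by simp
  qed
  show "integrable (PiM J M) (\<lambda>\<omega>. g (\<omega> j))" using my_int_prod_gen(1)[OF J(1) fi] by (simp add: e)
  show "(\<integral>\<omega>. g (\<omega> j) \<partial>PiM J M) = integral\<^sup>L (M j) g"
    using my_int_prod_gen(2)[OF J(1) fi] by (simp add: e e2)
qed

lemma my_int_pair:
  fixes g h :: "'a \<Rightarrow> real"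
  assumes J: "finite J" "i \<in> J" "j \<in> J" "i \<noteq> j" and g: "integrable (M i) g" and h: "integrable (M j) h"
  shows "integrable (PiM J M) (\<lambda>\<omega>. g (\<omega> i) * h (\<omega> j))"
    "(\<integral>\<omega>. g (\<omega> i) * h (\<omega> j) \<partial>PiM J M) = integral\<^sup>L (M i) g * integral\<^sup>L (M j) h"
proof -
  define f where "f = (\<lambda>k. if k = i then g else if k = j then h else (\<lambda>_. 1::real))"
  have fi: "\<And>k. k \<in> J \<Longrightarrow> integrable (M k) (f k)" using g h by (auto simp: f_def)
  have P: "\<And>a b::real. (\<Prod>k\<in>J. if k = i then a else if k = j then b else 1) = a * b"
  proof -
    fix a b :: real
    have "(\<Prod>k\<in>J. if k = i then a else if k = j then b else 1)
        = (\<Prod>k\<in>J. (if k = i then a else 1) * (if k = j then b else 1))"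
      using J(4) by (intro prod.cong) auto
    also have "\<dots> = a * b" using J by (simp add: prod.distrib)
    finally show "?thesis a b" .
  qed
  have e: "(\<Prod>k\<in>J. f k (\<omega> k)) = g (\<omega> i) * h (\<omega> j)" for \<omega>
  proof -
    have "(\<Prod>k\<in>J. f k (\<omega> k)) = (\<Prod>k\<in>J. if k = i then g (\<omega> i) else if k = j then h (\<omega> j) else 1)"
      by (intro prod.cong) (auto simp: f_def M.prob_space)
    then show ?thesis using P by simp
  qed
  have e2: "(\<Prod>k\<in>J. integral\<^sup>L (M k) (f k)) = integral\<^sup>L (M i) g * integral\<^sup>L (M j) h"
  proof -
    have "(\<Prod>k\<in>J. integral\<^sup>L (M k) (f k)) = (\<Prod>k\<in>J. if k = i then integral\<^sup>L (M i) g else if k = j then integral\<^sup>L (M j) h else 1)"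
      by (intro prod.cong) (auto simp: f_def M.prob_space)
    then show ?thesis using P by simp
  qed
  show "integrable (PiM J M) (\<lambda>\<omega>. g (\<omega> i) * h (\<omega> j))" using my_int_prod_gen(1)[OF J(1) fi] by (simp add: e)
  show "(\<integral>\<omega>. g (\<omega> i) * h (\<omega> j) \<partial>PiM J M) = integral\<^sup>L (M i) g * integral\<^sup>L (M j) h"
    using my_int_prod_gen(2)[OF J(1) fi] by (simp add: e e2)
qed

end



lemma my_comb_moments:
  fixes M :: "'i \<Rightarrow> real measure" and c :: "'i \<Rightarrow> real" and J :: "'i set"
  assumes PP: "product_prob_space M" and J: "finite J"
    and int: "\<And>i. i \<in> J \<Longrightarrow> integrable (M i) (\<lambda>t. t) \<and> integrable (M i) (\<lambda>t. t^2)"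
  shows "integrable (PiM J M) (\<lambda>\<omega>. \<Sum>i\<in>J. c i * \<omega> i)"
    "integrable (PiM J M) (\<lambda>\<omega>. (\<Sum>i\<in>J. c i * \<omega> i)^2)"
    "(\<integral>\<omega>. (\<Sum>i\<in>J. c i * \<omega> i) \<partial>PiM J M) = (\<Sum>i\<in>J. c i * (\<integral>t. t \<partial>M i))"
    "(\<integral>\<omega>. ((\<Sum>i\<in>J. c i * \<omega> i) - (\<Sum>i\<in>J. c i * (\<integral>t. t \<partial>M i)))^2 \<partial>PiM J M)
       = (\<Sum>i\<in>J. (c i)^2 * (\<integral>t. (t - (\<integral>t. t \<partial>M i))^2 \<partial>M i))"
proof -
  interpret product_prob_space M J using PP by simp
  define m where "m i = (\<integral>t. t \<partial>M i)" for i
  have i1: "integrable (M i) (\<lambda>t. t)" if "i \<in> J" for i using int[OF that] by simp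
  have i2: "integrable (M i) (\<lambda>t. t^2)" if "i \<in> J" for i using int[OF that] by simp
  have ia: "integrable (M i) (\<lambda>t. t - a)" if "i \<in> J" for i a
    using i1[OF that] by (intro Bochner_Integration.integrable_diff) auto
  have iaa: "integrable (M i) (\<lambda>t. (t - a) * (t - b))" if "i \<in> J" for i a b
  proof -
    have e: "(\<lambda>t. (t - a) * (t - b)) = (\<lambda>t. t^2 - (a + b) * t + a * b)"
      by (auto simp: algebra_simps power2_eq_square)
    show ?thesis unfolding e using i1[OF that] i2[OF that]
      by (intro Bochner_Integration.integrable_add Bochner_Integration.integrable_diff
            integrable_mult_right) auto
  qed
  have pint: "integrable (PiM J M) (\<lambda>\<omega>. (\<omega> i - a i) * (\<omega> j - a j))" if "i \<in> J" "j \<in> J" for i j a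
  proof (cases "i = j")
    case True
    then show ?thesis using my_int_single(1)[OF J that(1) iaa[OF that(1), of "a i" "a i"]] by simp
  next
    case False
    then show ?thesis using my_int_pair(1)[OF J that False ia[OF that(1)] ia[OF that(2)]] by simp
  qed
  have sqe: "(\<Sum>i\<in>J. c i * (\<omega> i - a i))^2 = (\<Sum>i\<in>J. \<Sum>j\<in>J. c i * c j * ((\<omega> i - a i) * (\<omega> j - a j)))"
    for \<omega> :: "'i \<Rightarrow> real" and a
    by (simp add: power2_eq_square sum_product algebra_simps)
  have sqi: "integrable (PiM J M) (\<lambda>\<omega>. (\<Sum>i\<in>J. c i * (\<omega> i - a i))^2)"
     "(\<integral>\<omega>. (\<Sum>i\<in>J. c i * (\<omega> i - a i))^2 \<partial>PiM J M)
       = (\<Sum>i\<in>J. \<Sum>j\<in>J. c i * c j * (\<integral>\<omega>. (\<omega> i - a i) * (\<omega> j - a j) \<partial>PiM J M))" for a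
    unfolding sqe using pint
    by (auto intro!: Bochner_Integration.integrable_sum integrable_mult_right
             simp: Bochner_Integration.integral_sum)
  have lin: "integrable (PiM J M) (\<lambda>\<omega>. \<Sum>i\<in>J. c i * \<omega> i)"
    using my_int_single(1)[OF J _ i1]
    by (auto intro!: Bochner_Integration.integrable_sum integrable_mult_right)
  show "integrable (PiM J M) (\<lambda>\<omega>. \<Sum>i\<in>J. c i * \<omega> i)" by (fact lin)
  show "integrable (PiM J M) (\<lambda>\<omega>. (\<Sum>i\<in>J. c i * \<omega> i)^2)"
    using sqi(1)[of "\<lambda>_. 0"] by simp
  show mean: "(\<integral>\<omega>. (\<Sum>i\<in>J. c i * \<omega> i) \<partial>PiM J M) = (\<Sum>i\<in>J. c i * (\<integral>t. t \<partial>M i))"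
    using my_int_single[OF J _ i1]
    by (auto simp: Bochner_Integration.integral_sum intro!: sum.cong)
  have zero: "(\<integral>t. t - m i \<partial>M i) = 0" if "i \<in> J" for i
    using i1[OF that] by (simp add: m_def M.prob_space)
  have cross: "(\<integral>\<omega>. (\<omega> i - m i) * (\<omega> j - m j) \<partial>PiM J M)
      = (if i = j then (\<integral>t. (t - m i)^2 \<partial>M i) else 0)" if "i \<in> J" "j \<in> J" for i j
  proof (cases "i = j")
    case True
    then show ?thesis using my_int_single(2)[OF J that(1) iaa[OF that(1), of "m i" "m i"]]
      by (simp add: power2_eq_square)
  next
    case False
    then show ?thesis using my_int_pair(2)[OF J that False ia[OF that(1)] ia[OF that(2)]] zero that
      by simp
  qed
  have re: "(\<Sum>i\<in>J. c i * \<omega> i) - (\<Sum>i\<in>J. c i * m i) = (\<Sum>i\<in>J. c i * (\<omega> i - m i))" for \<omega> :: "'i \<Rightarrow> real"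
    by (simp add: sum_subtractf algebra_simps)
  have "(\<integral>\<omega>. ((\<Sum>i\<in>J. c i * \<omega> i) - (\<Sum>i\<in>J. c i * m i))^2 \<partial>PiM J M)
      = (\<Sum>i\<in>J. \<Sum>j\<in>J. c i * c j * (if i = j then (\<integral>t. (t - m i)^2 \<partial>M i) else 0))"
    unfolding re sqi(2) using cross by (auto intro!: sum.cong)
  also have "\<dots> = (\<Sum>i\<in>J. (c i)^2 * (\<integral>t. (t - m i)^2 \<partial>M i))"
  proof (rule sum.cong[OF refl])
    fix i assume "i \<in> J"
    have "(\<Sum>j\<in>J. c i * c j * (if i = j then (\<integral>t. (t - m i)^2 \<partial>M i) else 0))
        = (\<Sum>j\<in>J. if i = j then c i * c i * (\<integral>t. (t - m i)^2 \<partial>M i) else 0)"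
      by (intro sum.cong) auto
    then show "(\<Sum>j\<in>J. c i * c j * (if i = j then (\<integral>t. (t - m i)^2 \<partial>M i) else 0))
        = (c i)^2 * (\<integral>t. (t - m i)^2 \<partial>M i)" using J \<open>i \<in> J\<close> by (simp add: power2_eq_square)
  qed
  finally show "(\<integral>\<omega>. ((\<Sum>i\<in>J. c i * \<omega> i) - (\<Sum>i\<in>J. c i * (\<integral>t. t \<partial>M i)))^2 \<partial>PiM J M)
       = (\<Sum>i\<in>J. (c i)^2 * (\<integral>t. (t - (\<integral>t. t \<partial>M i))^2 \<partial>M i))" by (simp add: m_def)
qed




lemma my_combo:
  fixes N :: "nat \<Rightarrow> real measure" and c :: "nat \<Rightarrow> real" and n :: nat
  assumes N: "\<And>i. i < n \<Longrightarrow> prob_space (N i) \<and> sets (N i) = sets borel \<and>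
      integrable (N i) (\<lambda>t. t) \<and> integrable (N i) (\<lambda>t. t ^ 2)"
  defines "D \<equiv> distr (PiM {..<n} N) borel (\<lambda>\<omega>. \<Sum>i<n. c i * \<omega> i)"
  shows "prob_space D" "sets D = sets borel" "integrable D (\<lambda>t. t)" "integrable D (\<lambda>t. t ^ 2)"
    "(\<integral>t. t \<partial>D) = (\<Sum>i<n. c i * (\<integral>t. t \<partial>N i))"
    "(\<integral>t. (t - (\<Sum>i<n. c i * (\<integral>t. t \<partial>N i)))^2 \<partial>D)
       = (\<Sum>i<n. (c i)^2 * (\<integral>t. (t - (\<integral>t. t \<partial>N i))^2 \<partial>N i))"
proof -
  define M' where "M' i = (if i < n then N i else return borel 0)" for i
  have PM: "PiM {..<n} N = PiM {..<n} M'" by (intro PiM_cong) (auto simp: M'_def)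
  have pM: "prob_space (M' i)" for i using N by (auto simp: M'_def prob_space_return)
  have sM: "sets (M' i) = sets borel" for i using N by (auto simp: M'_def)
  have PP: "product_prob_space M'" by (rule product_prob_spaceI[OF pM])
  have intM: "\<And>i. i \<in> {..<n} \<Longrightarrow> integrable (M' i) (\<lambda>t. t) \<and> integrable (M' i) (\<lambda>t. t^2)"
    using N by (auto simp: M'_def)
  have comp: "(\<lambda>\<omega>. \<omega> i) \<in> borel_measurable (PiM {..<n} M')" if "i < n" for i
  proof -
    have "(\<lambda>\<omega>. \<omega> i) \<in> measurable (PiM {..<n} M') (M' i)"
      using that by (intro measurable_component_singleton) auto
    then show ?thesis using measurable_cong_sets[OF refl sM] by blast
  qed
  have Zm: "(\<lambda>\<omega>. \<Sum>i<n. c i * \<omega> i) \<in> borel_measurable (PiM {..<n} M')"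
    using comp by (intro borel_measurable_sum borel_measurable_times borel_measurable_const) auto
  have D': "D = distr (PiM {..<n} M') borel (\<lambda>\<omega>. \<Sum>i<n. c i * \<omega> i)" unfolding D_def PM ..
  have m: "(\<integral>t. t \<partial>M' i) = (\<integral>t. t \<partial>N i)" "(\<integral>t. (t - a)^2 \<partial>M' i) = (\<integral>t. (t - a)^2 \<partial>N i)"
    if "i < n" for i a using that by (auto simp: M'_def)
  note cm = my_comb_moments[OF PP finite_lessThan intM, where c=c]
  have ps: "prob_space (PiM {..<n} M')" by (rule prob_space_PiM) (rule pM)
  show "prob_space D" unfolding D' by (rule prob_space.prob_space_distr[OF ps Zm])
  show "sets D = sets borel" unfolding D' by simp
  show "integrable D (\<lambda>t. t)" unfolding D' using cm(1) by (subst integrable_distr_eq[OF Zm]) auto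
  show "integrable D (\<lambda>t. t ^ 2)" unfolding D' using cm(2) by (subst integrable_distr_eq[OF Zm]) auto
  show "(\<integral>t. t \<partial>D) = (\<Sum>i<n. c i * (\<integral>t. t \<partial>N i))"
    unfolding D' using cm(3) m by (subst integral_distr[OF Zm]) auto
  have "(\<integral>t. (t - (\<Sum>i<n. c i * (\<integral>t. t \<partial>N i)))^2 \<partial>D)
      = (\<integral>\<omega>. ((\<Sum>i<n. c i * \<omega> i) - (\<Sum>i<n. c i * (\<integral>t. t \<partial>M' i)))^2 \<partial>PiM {..<n} M')"
    unfolding D' using m by (subst integral_distr[OF Zm]) auto
  also have "\<dots> = (\<Sum>i<n. (c i)^2 * (\<integral>t. (t - (\<integral>t. t \<partial>M' i))^2 \<partial>M' i))" by (rule cm(4))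
  also have "\<dots> = (\<Sum>i<n. (c i)^2 * (\<integral>t. (t - (\<integral>t. t \<partial>N i))^2 \<partial>N i))"
    using m by (auto intro!: sum.cong)
  finally show "(\<integral>t. (t - (\<Sum>i<n. c i * (\<integral>t. t \<partial>N i)))^2 \<partial>D)
       = (\<Sum>i<n. (c i)^2 * (\<integral>t. (t - (\<integral>t. t \<partial>N i))^2 \<partial>N i))" .
qed




definition twop :: "real \<Rightarrow> real \<Rightarrow> real measure" where
  "twop m s = distr (measure_pmf (bernoulli_pmf (1/2))) borel (\<lambda>b. if b then m + s else m - s)"

lemma twop:
  "prob_space (twop m s)" "sets (twop m s) = sets borel"
  "f \<in> borel_measurable borel \<Longrightarrow> integrable (twop m s) (f::real\<Rightarrow>real)" "(\<integral>t. t \<partial>twop m s) = m" "(\<integral>t. (t - m)^2 \<partial>twop m s) = s^2"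
proof -
  have meas: "(\<lambda>b. if b then m + s else m - s) \<in> measurable (measure_pmf (bernoulli_pmf (1/2))) borel"
    by simp
  show "prob_space (twop m s)" unfolding twop_def
    by (rule prob_space.prob_space_distr[OF prob_space_measure_pmf meas])
  show "sets (twop m s) = sets borel" unfolding twop_def by simp
  show "integrable (twop m s) f" if "f \<in> borel_measurable borel" unfolding twop_def
    by (subst integrable_distr_eq[OF meas that]) (rule integrable_measure_pmf_finite, simp)
  show "(\<integral>t. t \<partial>twop m s) = m" unfolding twop_def
    by (subst integral_distr[OF meas]) (auto simp: field_simps)
  show "(\<integral>t. (t - m)^2 \<partial>twop m s) = s^2" unfolding twop_def
    by (subst integral_distr[OF meas]) (auto simp: field_simps)
qed




lemma my_twop0: "(\<integral>t. t^2 \<partial>twop 0 s) = s^2" using twop(5)[of 0 s] by simp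

lemma my_lin_iff:
  fixes S :: "((real ^ ('n::finite)) \<times> real) list" and q :: "real ^ 'n" and v :: real
  assumes nn: "\<forall>j < length S. snd (S ! j) \<ge> 0"
  shows "lin_answerable S (q, v) \<longleftrightarrow>
     (\<exists>c :: nat \<Rightarrow> real. (\<Sum>j<length S. c j *\<^sub>R fst (S ! j)) = q
                \<and> (\<Sum>j<length S. (c j) ^ 2 * snd (S ! j)) \<le> v)"
proof
  assume "lin_answerable S (q, v)"
  then obtain c where C: "\<And>K :: nat \<Rightarrow> real ^ 'n \<Rightarrow> real measure.
       (\<forall>i < length S. answers (K i) (S ! i)) \<Longrightarrow>
       answers (\<lambda>x. distr (PiM {..<length S} (\<lambda>i. K i x)) borel
                          (\<lambda>\<omega>. \<Sum>i<length S. c i * \<omega> i)) (q, v)"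
    unfolding lin_answerable_def by blast
  define K where "K i x = twop (fst (S ! i) \<bullet> x) (sqrt (snd (S ! i)))" for i x
  have KA: "\<forall>i < length S. answers (K i) (S ! i)"
    using nn by (auto simp: answers_def K_def twop)
  note A = C[OF KA, unfolded answers_def, simplified]
  have N: "\<And>x i. i < length S \<Longrightarrow> prob_space (K i x) \<and> sets (K i x) = sets borel \<and>
      integrable (K i x) (\<lambda>t. t) \<and> integrable (K i x) (\<lambda>t. t ^ 2)"
    by (auto simp: K_def twop)
  have mean: "(\<Sum>i<length S. c i * (fst (S ! i) \<bullet> x)) = q \<bullet> x" for x
    using A my_combo(5)[where N="\<lambda>i. K i x" and n="length S" and c=c, OF N] by (simp add: K_def twop)
  have var: "(\<Sum>i<length S. (c i)^2 * snd (S ! i)) \<le> v"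
  proof -
    have "(\<Sum>i<length S. (c i)^2 * snd (S ! i)) = (\<Sum>i<length S. (c i)^2 * (\<integral>t. (t - (\<integral>t. t \<partial>K i 0))^2 \<partial>K i 0))"
      using nn by (intro sum.cong) (auto simp: K_def twop my_twop0)
    also have "\<dots> \<le> v" using spec[OF A, of 0] my_combo(6)[where N="\<lambda>i. K i 0" and n="length S" and c=c, OF N] my_combo(5)[where N="\<lambda>i. K i 0" and n="length S" and c=c, OF N] by simp
    finally show ?thesis .
  qed
  define w where "w = (\<Sum>j<length S. c j *\<^sub>R fst (S ! j))"
  have "w \<bullet> x = q \<bullet> x" for x
    using mean[of x] by (simp add: w_def inner_sum_left)
  then have "(w - q) \<bullet> (w - q) = 0" by (simp add: inner_diff_left)
  then have "w = q" by simp
  then show "\<exists>c :: nat \<Rightarrow> real. (\<Sum>j<length S. c j *\<^sub>R fst (S ! j)) = q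
                \<and> (\<Sum>j<length S. (c j) ^ 2 * snd (S ! j)) \<le> v"
    using var w_def by blast
next
  assume "\<exists>c :: nat \<Rightarrow> real. (\<Sum>j<length S. c j *\<^sub>R fst (S ! j)) = q
                \<and> (\<Sum>j<length S. (c j) ^ 2 * snd (S ! j)) \<le> v"
  then obtain c where cq: "(\<Sum>j<length S. c j *\<^sub>R fst (S ! j)) = q"
     and cv: "(\<Sum>j<length S. (c j) ^ 2 * snd (S ! j)) \<le> v" by blast
  show "lin_answerable S (q, v)" unfolding lin_answerable_def
  proof (intro exI[of _ c] allI impI)
    fix K :: "nat \<Rightarrow> real ^ 'n \<Rightarrow> real measure"
    assume KA: "\<forall>i<length S. answers (K i) (S ! i)"
    have N: "\<And>x i. i < length S \<Longrightarrow> prob_space (K i x) \<and> sets (K i x) = sets borel \<and>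
      integrable (K i x) (\<lambda>t. t) \<and> integrable (K i x) (\<lambda>t. t ^ 2)"
      using KA by (auto simp: answers_def)
      have mK: "(\<integral>t. t \<partial>K i x) = fst (S ! i) \<bullet> x" if "i < length S" for i x
      using KA that by (auto simp: answers_def)
    have vK: "(\<integral>t. (t - fst (S ! i) \<bullet> x)^2 \<partial>K i x) \<le> snd (S ! i)" if "i < length S" for i x
      using KA that by (auto simp: answers_def)
    have mean: "(\<Sum>i<length S. c i * (\<integral>t. t \<partial>K i x)) = q \<bullet> x" for x
      using mK by (simp add: cq[symmetric] inner_sum_left)
    show "answers (\<lambda>x. distr (PiM {..<length S} (\<lambda>i. K i x)) borel
                          (\<lambda>\<omega>. \<Sum>i<length S. c i * \<omega> i)) (q, v)"
      unfolding answers_def fst_conv snd_conv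
    proof (intro allI conjI)
      fix x
      show "prob_space (distr (PiM {..<length S} (\<lambda>i. K i x)) borel (\<lambda>\<omega>. \<Sum>i<length S. c i * \<omega> i))"
        using my_combo(1)[where N="\<lambda>i. K i x" and n="length S" and c=c, OF N] .
      show "sets (distr (PiM {..<length S} (\<lambda>i. K i x)) borel (\<lambda>\<omega>. \<Sum>i<length S. c i * \<omega> i)) = sets borel"
        by simp
      show "integrable (distr (PiM {..<length S} (\<lambda>i. K i x)) borel (\<lambda>\<omega>. \<Sum>i<length S. c i * \<omega> i)) (\<lambda>t. t)"
        using my_combo(3)[where N="\<lambda>i. K i x" and n="length S" and c=c, OF N] .
      show "integrable (distr (PiM {..<length S} (\<lambda>i. K i x)) borel (\<lambda>\<omega>. \<Sum>i<length S. c i * \<omega> i)) (\<lambda>t. t^2)"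
        using my_combo(4)[where N="\<lambda>i. K i x" and n="length S" and c=c, OF N] .
      show "(\<integral>t. t \<partial>distr (PiM {..<length S} (\<lambda>i. K i x)) borel (\<lambda>\<omega>. \<Sum>i<length S. c i * \<omega> i)) = q \<bullet> x"
        using my_combo(5)[where N="\<lambda>i. K i x" and n="length S" and c=c, OF N] mean by simp
      have "(\<integral>t. (t - q \<bullet> x)^2 \<partial>distr (PiM {..<length S} (\<lambda>i. K i x)) borel (\<lambda>\<omega>. \<Sum>i<length S. c i * \<omega> i))
          = (\<Sum>i<length S. (c i)^2 * (\<integral>t. (t - (\<integral>t. t \<partial>K i x))^2 \<partial>K i x))"
        using my_combo(6)[where N="\<lambda>i. K i x" and n="length S" and c=c, OF N] mean by simp
      also have "\<dots> \<le> (\<Sum>i<length S. (c i)^2 * snd (S ! i))"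
        using vK mK by (intro sum_mono mult_left_mono) auto
      also have "\<dots> \<le> v" by (rule cv)
      finally show "(\<integral>t. (t - q \<bullet> x)^2 \<partial>distr (PiM {..<length S} (\<lambda>i. K i x)) borel (\<lambda>\<omega>. \<Sum>i<length S. c i * \<omega> i)) \<le> v" .
    qed
  qed
qed




lemma my_perm_map:
  "mset xs = mset (map f ys) \<Longrightarrow> \<exists>ys'. mset ys' = mset ys \<and> map f ys' = xs"
proof (induction xs arbitrary: ys)
  case Nil then show ?case by auto
next
  case (Cons x xs)
  have "x \<in> set (map f ys)" using Cons.prems by (metis list.set_intros(1) set_mset_mset)
  then obtain y where y: "y \<in> set ys" "f y = x" by auto
  have h0: "image_mset f (mset ys) = add_mset x (mset xs)" using Cons.prems by simp
  have h: "mset xs = image_mset f (mset ys) - {#x#}" unfolding h0 by simp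
  have sub: "{#y#} \<subseteq># mset ys" using y(1) by simp
  have "mset (map f (remove1 y ys)) = image_mset f (mset ys) - {#f y#}"
    using image_mset_Diff[OF sub, of f] by (simp add: mset_remove1)
  then have "mset xs = mset (map f (remove1 y ys))" using h y(2) by simp
  then obtain zs where zs: "mset zs = mset (remove1 y ys)" "map f zs = xs" using Cons.IH by blast
  show ?case using zs y by (intro exI[of _ "y # zs"]) auto
qed

definition RL :: "('n::finite) query multiset \<Rightarrow> 'n query \<Rightarrow> bool" where
  "RL M Q \<longleftrightarrow> (\<exists>L. mset (map fst L) = M
       \<and> sum_list (map (\<lambda>(p,a). a *\<^sub>R fst p) L) = fst Q
       \<and> sum_list (map (\<lambda>(p,a). a^2 * snd p) L) \<le> snd Q)"

lemma my_sum_list_mset_inv: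
  fixes g :: "'a \<Rightarrow> 'b::comm_monoid_add"
  assumes "mset L' = mset L" shows "sum_list (map g L') = sum_list (map g L)"
proof -
  have "sum_list (map g L') = sum_mset (mset (map g L'))" by (simp only: sum_mset_sum_list)
  also have "\<dots> = sum_mset (mset (map g L))" by (simp only: mset_map assms)
  also have "\<dots> = sum_list (map g L)" by (simp only: sum_mset_sum_list)
  finally show ?thesis .
qed

lemma my_sum_list_map_nth: "sum_list (map g L) = (\<Sum>j<length L. g (L ! j))"
  by (simp add: sum_list_sum_nth atLeast0LessThan)

lemma my_sum_list_upt0: "sum_list (map g [0..<n]) = (\<Sum>j<n. g j)"
  by (induction n) auto

lemma my_RL_idx:
  "RL (mset S) (q, v) \<longleftrightarrow> (\<exists>c :: nat \<Rightarrow> real. (\<Sum>j<length S. c j *\<^sub>R fst (S ! j)) = q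
                \<and> (\<Sum>j<length S. (c j) ^ 2 * snd (S ! j)) \<le> v)"
proof
  assume "RL (mset S) (q, v)"
  then obtain L where L: "mset (map fst L) = mset S"
       "sum_list (map (\<lambda>(p,a). a *\<^sub>R fst p) L) = q"
       "sum_list (map (\<lambda>(p,a). a^2 * snd p) L) \<le> v" unfolding RL_def by auto
  obtain L' where L': "mset L' = mset L" "map fst L' = S" using my_perm_map[of S fst L] L(1) by metis
  have len: "length L' = length S" using L'(2) by auto
  have S: "S ! j = fst (L' ! j)" if "j < length S" for j using L'(2) that by auto
  show "\<exists>c :: nat \<Rightarrow> real. (\<Sum>j<length S. c j *\<^sub>R fst (S ! j)) = q
                \<and> (\<Sum>j<length S. (c j) ^ 2 * snd (S ! j)) \<le> v"
  proof (intro exI[of _ "\<lambda>j. snd (L' ! j)"] conjI)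
    have "(\<Sum>j<length S. snd (L' ! j) *\<^sub>R fst (S ! j)) = sum_list (map (\<lambda>(p,a). a *\<^sub>R fst p) L')"
      unfolding my_sum_list_map_nth len by (intro sum.cong refl) (simp add: S split: prod.splits)
    also have "\<dots> = q" using my_sum_list_mset_inv[OF L'(1), of "\<lambda>(p,a). a *\<^sub>R fst p"] L(2) by simp
    finally show "(\<Sum>j<length S. snd (L' ! j) *\<^sub>R fst (S ! j)) = q" .
    have "(\<Sum>j<length S. (snd (L' ! j))^2 * snd (S ! j)) = sum_list (map (\<lambda>(p,a). a^2 * snd p) L')"
      unfolding my_sum_list_map_nth len by (intro sum.cong refl) (simp add: S split: prod.splits)
    also have "\<dots> \<le> v" using my_sum_list_mset_inv[OF L'(1), of "\<lambda>(p,a). a^2 * snd p"] L(3) by simp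
    finally show "(\<Sum>j<length S. (snd (L' ! j))^2 * snd (S ! j)) \<le> v" .
  qed
next
  assume "\<exists>c :: nat \<Rightarrow> real. (\<Sum>j<length S. c j *\<^sub>R fst (S ! j)) = q
                \<and> (\<Sum>j<length S. (c j) ^ 2 * snd (S ! j)) \<le> v"
  then obtain c where c: "(\<Sum>j<length S. c j *\<^sub>R fst (S ! j)) = q"
                "(\<Sum>j<length S. (c j) ^ 2 * snd (S ! j)) \<le> v" by blast
  define L where "L = map (\<lambda>j. (S ! j, c j)) [0..<length S]"
  have "map fst L = map (\<lambda>j. S ! j) [0..<length S]" by (simp add: L_def)
  also have "\<dots> = S" by (rule map_nth)
  finally have l1: "map fst L = S" .
  have l2: "sum_list (map (\<lambda>(p,a). a *\<^sub>R fst p) L) = q"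
    unfolding L_def map_map my_sum_list_upt0 o_def using c(1) by simp
  have l3: "sum_list (map (\<lambda>(p,a). a^2 * snd p) L) \<le> v"
    unfolding L_def map_map my_sum_list_upt0 o_def using c(2) by simp
  show "RL (mset S) (q, v)" unfolding RL_def fst_conv snd_conv using l1 l2 l3
    by (intro exI[of _ L] conjI) simp_all
qed




lemma my_sum_list_concat_map: "sum_list (map g (concat X)) = sum_list (map (\<lambda>xs. sum_list (map g xs)) X)"
  by (induction X) auto

lemma my_H1: "sum_list (map (\<lambda>(p,a). a *\<^sub>R fst p) (map (\<lambda>(p,a). (p, d * a)) L))
     = d *\<^sub>R sum_list (map (\<lambda>(p,a). a *\<^sub>R (fst p :: real ^ 'n)) L)"
  by (induction L) (auto simp: scaleR_add_right)

lemma my_H2: "sum_list (map (\<lambda>(p,a). a^2 * snd p) (map (\<lambda>(p,a). (p, d * a)) L))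
     = d^2 * sum_list (map (\<lambda>(p,a). a^2 * (snd p :: real)) L)"
  by (induction L) (auto simp: algebra_simps power_mult_distrib)

lemma my_sum_list_singles: "sum_list (map (\<lambda>x. {#x#}) xs) = mset xs"
  by (induction xs) auto

lemma my_determ_RL: "determ M Q \<Longrightarrow> RL M Q"
proof (induction rule: determ.induct)
  case (summation qs)
  show ?case unfolding RL_def
    by (intro exI[of _ "map (\<lambda>p. (p, 1::real)) qs"]) (simp add: o_def)
next
  case (scalar v q c)
  show ?case unfolding RL_def by (intro exI[of _ "[((q, v), c)]"]) simp
next
  case (relax v v' q)
  show ?case unfolding RL_def using relax by (intro exI[of _ "[((q, v), 1)]"]) simp
next
  case (trans Ss Qs Q)
  define n where "n = length Ss"
  obtain q v where Q: "Q = (q, v)" by (cases Q)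
  have "\<forall>i\<in>{..<n}. \<exists>L. mset (map fst L) = Ss ! i
       \<and> sum_list (map (\<lambda>(p,a). a *\<^sub>R fst p) L) = fst (Qs ! i)
       \<and> sum_list (map (\<lambda>(p,a). a^2 * snd p) L) \<le> snd (Qs ! i)"
  proof
    fix i assume "i \<in> {..<n}"
    then have "i < length Ss" by (simp add: n_def)
    then have "RL (Ss ! i) (Qs ! i)" using trans.IH(1) by blast
    then show "\<exists>L. mset (map fst L) = Ss ! i
       \<and> sum_list (map (\<lambda>(p,a). a *\<^sub>R fst p) L) = fst (Qs ! i)
       \<and> sum_list (map (\<lambda>(p,a). a^2 * snd p) L) \<le> snd (Qs ! i)" unfolding RL_def .
  qed
  from bchoice[OF this] obtain F where F0: "\<forall>i\<in>{..<n}. mset (map fst (F i)) = Ss ! i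
       \<and> sum_list (map (\<lambda>(p,a). a *\<^sub>R fst p) (F i)) = fst (Qs ! i)
       \<and> sum_list (map (\<lambda>(p,a). a^2 * snd p) (F i)) \<le> snd (Qs ! i)" by (elim exE)
  have F: "mset (map fst (F i)) = Ss ! i
       \<and> sum_list (map (\<lambda>(p,a). a *\<^sub>R fst p) (F i)) = fst (Qs ! i)
       \<and> sum_list (map (\<lambda>(p,a). a^2 * snd p) (F i)) \<le> snd (Qs ! i)" if "i < n" for i
    using F0 that by blast
  obtain d where d: "(\<Sum>j<length Qs. d j *\<^sub>R fst (Qs ! j)) = q"
     "(\<Sum>j<length Qs. (d j) ^ 2 * snd (Qs ! j)) \<le> v"
    using trans.IH(2) my_RL_idx[of Qs q v] Q by auto
  have lenQ: "length Qs = n" using trans.hyps(1) n_def by simp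
  define L where "L = concat (map (\<lambda>i. map (\<lambda>(p,a). (p, d i * a)) (F i)) [0..<n])"
  have "mset (map fst L) = sum_list (map (\<lambda>i. mset (map fst (F i))) [0..<n])"
    by (simp add: L_def map_concat mset_concat o_def case_prod_beta)
  also have "\<dots> = sum_list (map (\<lambda>i. Ss ! i) [0..<n])"
  proof (intro arg_cong[where f=sum_list] map_cong refl)
    fix i assume "i \<in> set [0..<n]"
    then have "i < n" by simp
    then show "mset (map fst (F i)) = Ss ! i" using F by blast
  qed
  also have "\<dots> = sum_list Ss" unfolding n_def by (simp only: map_nth)
  finally have l1: "mset (map fst L) = sum_list Ss" .
  have "sum_list (map (\<lambda>(p,a). a *\<^sub>R fst p) L) = sum_list (map (\<lambda>i. d i *\<^sub>R fst (Qs ! i)) [0..<n])"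
  proof -
    have pt: "sum_list (map (\<lambda>(p,a). a *\<^sub>R fst p) (map (\<lambda>(p,a). (p, d i * a)) (F i))) = d i *\<^sub>R fst (Qs ! i)"
      if "i \<in> set [0..<n]" for i
    proof -
      have "i < n" using that by simp
      then show ?thesis by (simp only: my_H1 F)
    qed
    show ?thesis unfolding L_def my_sum_list_concat_map map_map
      by (intro arg_cong[where f=sum_list] map_cong refl) (simp only: comp_apply pt)
  qed
  also have "\<dots> = q" unfolding my_sum_list_upt0 using d(1) unfolding lenQ .
  finally have l2: "sum_list (map (\<lambda>(p,a). a *\<^sub>R fst p) L) = q" .
  have "sum_list (map (\<lambda>(p,a). a^2 * snd p) L)
      = sum_list (map (\<lambda>i. (d i)^2 * sum_list (map (\<lambda>(p,a). a^2 * snd p) (F i))) [0..<n])"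
    unfolding L_def my_sum_list_concat_map map_map
    by (intro arg_cong[where f=sum_list] map_cong refl) (simp only: comp_apply my_H2)
  also have "\<dots> = (\<Sum>i<n. (d i)^2 * sum_list (map (\<lambda>(p,a). a^2 * snd p) (F i)))"
    unfolding my_sum_list_upt0 ..
  also have "\<dots> \<le> (\<Sum>i<n. (d i)^2 * snd (Qs ! i))"
  proof (intro sum_mono mult_left_mono)
    fix i assume "i \<in> {..<n}"
    then have "i < n" by simp
    then show "sum_list (map (\<lambda>(p,a). a^2 * snd p) (F i)) \<le> snd (Qs ! i)" using F by blast
    show "0 \<le> (d i)^2" by simp
  qed
  also have "\<dots> \<le> v" using d(2) unfolding lenQ .
  finally have l3: "sum_list (map (\<lambda>(p,a). a^2 * snd p) L) \<le> v" .
  show ?case unfolding RL_def Q fst_conv snd_conv using l1 l2 l3 by blast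
qed

lemma my_idx_determ:
  fixes S :: "((real ^ ('n::finite)) \<times> real) list"
  assumes nn: "\<forall>j < length S. snd (S ! j) \<ge> 0"
    and cq: "(\<Sum>j<length S. c j *\<^sub>R fst (S ! j)) = q"
    and cv: "(\<Sum>j<length S. (c j) ^ 2 * snd (S ! j)) \<le> v"
  shows "determ (mset S) (q, v)"
proof -
  define n where "n = length S"
  define Ss where "Ss = map (\<lambda>j. {#S ! j#}) [0..<n]"
  define Qs where "Qs = map (\<lambda>j. (c j *\<^sub>R fst (S ! j), (c j)^2 * snd (S ! j))) [0..<n]"
  define V where "V = (\<Sum>j<n. (c j) ^ 2 * snd (S ! j))"
  have a: "\<forall>i < length Ss. determ (Ss ! i) (Qs ! i)"
  proof (intro allI impI)
    fix i assume "i < length Ss"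
    then have i: "i < n" by (simp add: Ss_def)
    have "determ {#(fst (S ! i), snd (S ! i))#} (c i *\<^sub>R fst (S ! i), (c i)^2 * snd (S ! i))"
      using nn i n_def by (intro scalar) auto
    then show "determ (Ss ! i) (Qs ! i)" using i by (simp add: Ss_def Qs_def)
  qed
  have b: "determ (mset Qs) (sum_list (map fst Qs), sum_list (map snd Qs))"
    using nn by (intro summation) (auto simp: Qs_def n_def)
  have sQ1: "sum_list (map fst Qs) = q" using cq unfolding Qs_def map_map o_def my_sum_list_upt0 n_def by simp
  have sQ2: "sum_list (map snd Qs) = V" unfolding Qs_def map_map o_def my_sum_list_upt0 V_def by simp
  have sS: "sum_list Ss = mset S"
  proof -
    have "Ss = map (\<lambda>x. {#x#}) (map (\<lambda>j. S ! j) [0..<n])" by (simp add: Ss_def)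
    also have "map (\<lambda>j. S ! j) [0..<n] = S" unfolding n_def by (rule map_nth)
    finally show ?thesis by (simp add: my_sum_list_singles)
  qed
  have c1: "determ (mset S) (q, V)"
  proof -
    have "length Ss = length Qs" by (simp add: Ss_def Qs_def)
    from determ.trans[OF this a b] show ?thesis unfolding sS sQ1 sQ2 .
  qed
  have V0: "0 \<le> V" unfolding V_def using nn n_def by (intro sum_nonneg) auto
  have c2: "determ (mset [(q, V)]) (q, v)" using relax[OF V0] cv V_def n_def by simp
  have "determ (sum_list [mset S]) (q, v)"
  proof (rule determ.trans[of "[mset S]" "[(q, V)]"])
    show "length [mset S] = length [(q, V)]" by simp
    show "\<forall>i<length [mset S]. determ ([mset S] ! i) ([(q, V)] ! i)" using c1 by simp
    show "determ (mset [(q, V)]) (q, v)" by (rule c2)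
  qed
  then show ?thesis by simp
qed


theorem proposition1:
  fixes S :: "((real ^ ('n::finite)) \<times> real) list" and q :: "real ^ 'n" and v :: real
  assumes "\<forall>j < length S. snd (S ! j) \<ge> 0" and "v \<ge> 0"
  shows "(lin_answerable S (q, v) \<longleftrightarrow> determ (mset S) (q, v))
       \<and> (determ (mset S) (q, v) \<longleftrightarrow>
          (\<exists>c :: nat \<Rightarrow> real. (\<Sum>j<length S. c j *\<^sub>R fst (S ! j)) = q
                \<and> (\<Sum>j<length S. (c j) ^ 2 * snd (S ! j)) \<le> v))"
proof -
  have A: "determ (mset S) (q, v) \<longleftrightarrow>
          (\<exists>c :: nat \<Rightarrow> real. (\<Sum>j<length S. c j *\<^sub>R fst (S ! j)) = q
                \<and> (\<Sum>j<length S. (c j) ^ 2 * snd (S ! j)) \<le> v)"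
  proof
    assume "determ (mset S) (q, v)"
    then have "RL (mset S) (q, v)" by (rule my_determ_RL)
    then show "\<exists>c :: nat \<Rightarrow> real. (\<Sum>j<length S. c j *\<^sub>R fst (S ! j)) = q
                \<and> (\<Sum>j<length S. (c j) ^ 2 * snd (S ! j)) \<le> v" using my_RL_idx by blast
  next
    assume "\<exists>c :: nat \<Rightarrow> real. (\<Sum>j<length S. c j *\<^sub>R fst (S ! j)) = q
                \<and> (\<Sum>j<length S. (c j) ^ 2 * snd (S ! j)) \<le> v"
    then obtain c where "(\<Sum>j<length S. c j *\<^sub>R fst (S ! j)) = q"
                "(\<Sum>j<length S. (c j) ^ 2 * snd (S ! j)) \<le> v" by blast
    then show "determ (mset S) (q, v)" using my_idx_determ[OF assms(1)] by blast
  qed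
  have B: "lin_answerable S (q, v) \<longleftrightarrow>
          (\<exists>c :: nat \<Rightarrow> real. (\<Sum>j<length S. c j *\<^sub>R fst (S ! j)) = q
                \<and> (\<Sum>j<length S. (c j) ^ 2 * snd (S ! j)) \<le> v)"
    by (rule my_lin_iff[OF assms(1)])
  show ?thesis using A B by blast
qed

end
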